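(* Let $(X,\mathcal{A})$ be a measurable space, $f,g\in\mathcal{F}_{[0,1]}^{(X,\mathcal{A})}$ comonotone, and $\star:[0,1]^2\to[0,1]$ continuous, non-decreasing in both arguments and bounded from above by the minimum ($a\star b\le\min(a,b)$). Then for every monotone measure $m$ on $(X,\mathcal{A})$ with $m(X)=1$ and all $\alpha,\beta,\gamma,\lambda,\upsilon,\tau\in(0,\infty)$ with $0<\alpha\lambda\le1$, $\beta\upsilon\ge1$, $\gamma\tau\ge1$, $\lambda\le\tau$ and $\lambda\le\upsilon$, \[ \big[\mathbf{Su}(m,(f\star g)^{\alpha})\big]^{\lambda}\ \ge\ \big[\mathbf{Su}(m,f^{\beta})\big]^{\upsilon}\star\big[\mathbf{Su}(m,g^{\gamma})\big]^{\tau}. \]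
   Context: A monotone measure on $(X,\mathcal{A})$ is $m:\mathcal{A}\to[0,\infty]$ with $m(\emptyset)=0$, $m(X)>0$, $m(A)\le m(B)$ for $A\subseteq B$. $\mathcal{F}_{[0,1]}^{(X,\mathcal{A})}$ is the set of $\mathcal{A}$-measurable $f:X\to[0,1]$. The Sugeno integral is $\mathbf{Su}(m,f)=\sup\{\min(t,m(\{f\ge t\})) : t\in(0,\infty]\}$. $f,g$ are comonotone if $(f(x)-f(y))(g(x)-g(y))\ge0$ for all $x,y$. Operations on functions are pointwise. *)

theory Defs
  imports "HOL-Analysis.Analysis"
begin

definition monotone_measure :: "'a measure \<Rightarrow> ('a set \<Rightarrow> ennreal) \<Rightarrow> bool" where
  "monotone_measure M m \<longleftrightarrow> m {} = 0 \<and> m (space M) > 0 \<and>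
     (\<forall>A\<in>sets M. \<forall>B\<in>sets M. A \<subseteq> B \<longrightarrow> m A \<le> m B)"

definition unit_funs :: "'a measure \<Rightarrow> ('a \<Rightarrow> real) set" where
  "unit_funs M = {f. f \<in> borel_measurable M \<and> (\<forall>x\<in>space M. 0 \<le> f x \<and> f x \<le> 1)}"

definition sugeno :: "'a measure \<Rightarrow> ('a set \<Rightarrow> ennreal) \<Rightarrow> ('a \<Rightarrow> real) \<Rightarrow> ennreal" where
  "sugeno M m f = (SUP t\<in>{0<..}. min t (m {x\<in>space M. t \<le> ennreal (f x)}))"

definition comonotone :: "'a measure \<Rightarrow> ('a \<Rightarrow> real) \<Rightarrow> ('a \<Rightarrow> real) \<Rightarrow> bool" where
  "comonotone M f g \<longleftrightarrow> (\<forall>x\<in>space M. \<forall>y\<in>space M. (f x - f y) * (g x - g y) \<ge> 0)"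

end

theory Submission
  imports Defs
begin

lemma mm_mono:
  assumes "monotone_measure M m" "A \<in> sets M" "B \<in> sets M" "A \<subseteq> B"
  shows "m A \<le> m B"
proof -
  have "\<forall>A\<in>sets M. \<forall>B\<in>sets M. A \<subseteq> B \<longrightarrow> m A \<le> m B"
    using assms(1) by (simp add: monotone_measure_def)
  then show ?thesis using assms(2-4) by simp
qed

lemma ennmin: "ennreal (min a b) = min (ennreal a) (ennreal b)"
  by (cases "a \<le> b") (simp_all add: ennreal_leI min.absorb1 min.absorb2)

lemma su_le1:
  assumes mm: "monotone_measure M m" and m1: "m (space M) = 1" and h: "h \<in> borel_measurable M"
  shows "sugeno M m h \<le> 1"
  unfolding sugeno_def
proof (rule SUP_least)
  fix t :: ennreal
  have S: "{x\<in>space M. t \<le> ennreal (h x)} \<in> sets M" using h by measurable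
  have "m {x\<in>space M. t \<le> ennreal (h x)} \<le> m (space M)"
    by (rule mm_mono[OF mm S sets.top]) auto
  then show "min t (m {x\<in>space M. t \<le> ennreal (h x)}) \<le> 1" using m1
    by (metis min.coboundedI2)
qed

lemma su_ge:
  assumes "(t::real) > 0"
  shows "min (ennreal t) (m {x\<in>space M. ennreal t \<le> ennreal (h x)}) \<le> sugeno M m h"
  unfolding sugeno_def by (rule SUP_upper) (use assms in simp)

lemma su_approx:
  assumes mm: "monotone_measure M m" and h: "h \<in> borel_measurable M"
    and c: "(c::real) > 0" and lt: "ennreal c < sugeno M m h"
  shows "ennreal c \<le> m {x\<in>space M. c \<le> h x}"
proof -
  obtain t where t: "t \<in> {0<..}" and lt2: "ennreal c < min t (m {x\<in>space M. t \<le> ennreal (h x)})"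
    using lt unfolding sugeno_def less_SUP_iff by blast
  have ct: "ennreal c < t" using lt2 by simp
  have sub: "{x\<in>space M. t \<le> ennreal (h x)} \<subseteq> {x\<in>space M. c \<le> h x}"
  proof safe
    fix x assume "x \<in> space M" "t \<le> ennreal (h x)"
    then have "ennreal c < ennreal (h x)" using ct by order
    then show "c \<le> h x" using c
      by (metis ennreal_less_iff ennreal_neg leD le_less_linear less_imp_le not_less_iff_gr_or_eq)
  qed
  have S1: "{x\<in>space M. t \<le> ennreal (h x)} \<in> sets M" using h by measurable
  have S2: "{x\<in>space M. c \<le> h x} \<in> sets M" using h by measurable
  have "m {x\<in>space M. t \<le> ennreal (h x)} \<le> m {x\<in>space M. c \<le> h x}"
    by (rule mm_mono[OF mm S1 S2 sub])
  then show ?thesis using lt2 by (meson dual_order.trans le_less min.strict_boundedE)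
qed

theorem corollary3p18:
  fixes M :: "'a measure" and f g :: "'a \<Rightarrow> real" and star :: "real \<Rightarrow> real \<Rightarrow> real"
    and m :: "'a set \<Rightarrow> ennreal"
    and al be ga la ups tau :: real
  assumes "f \<in> unit_funs M" and "g \<in> unit_funs M" and "comonotone M f g"
    and "continuous_on ({0..1} \<times> {0..1}) (\<lambda>(a, b). star a b)"
    and "\<forall>a\<in>{0..1}. \<forall>b\<in>{0..1}. star a b \<in> {0..1}"
    and "\<forall>a\<in>{0..1}. \<forall>a'\<in>{0..1}. \<forall>b\<in>{0..1}. \<forall>b'\<in>{0..1}.
           a \<le> a' \<longrightarrow> b \<le> b' \<longrightarrow> star a b \<le> star a' b'"
    and "\<forall>a\<in>{0..1}. \<forall>b\<in>{0..1}. star a b \<le> min a b"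
    and "monotone_measure M m" and "m (space M) = 1"
    and "al > 0" "be > 0" "ga > 0" "la > 0" "ups > 0" "tau > 0"
    and "al * la \<le> 1" and "be * ups \<ge> 1" and "ga * tau \<ge> 1"
    and "la \<le> tau" and "la \<le> ups"
  shows "enn2real (sugeno M m (\<lambda>x. (star (f x) (g x)) powr al)) powr la \<ge>
         star (enn2real (sugeno M m (\<lambda>x. f x powr be)) powr ups)
              (enn2real (sugeno M m (\<lambda>x. g x powr ga)) powr tau)"
proof -
  note A = assms
  have fm[measurable]: "f \<in> borel_measurable M" and f01: "\<And>x. x \<in> space M \<Longrightarrow> 0 \<le> f x \<and> f x \<le> 1"
    using A(1) unfolding unit_funs_def by auto
  have gm[measurable]: "g \<in> borel_measurable M" and g01: "\<And>x. x \<in> space M \<Longrightarrow> 0 \<le> g x \<and> g x \<le> 1"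
    using A(2) unfolding unit_funs_def by auto
  have st01: "\<And>a b. a \<in> {0..1} \<Longrightarrow> b \<in> {0..1} \<Longrightarrow> 0 \<le> star a b \<and> star a b \<le> 1"
    using A(5) by auto
  have stmono: "\<And>a a' b b'. a \<in> {0..1} \<Longrightarrow> a' \<in> {0..1} \<Longrightarrow> b \<in> {0..1} \<Longrightarrow> b' \<in> {0..1} \<Longrightarrow>
     a \<le> a' \<Longrightarrow> b \<le> b' \<Longrightarrow> star a b \<le> star a' b'"
    using A(6) by (meson)
  have stmin: "\<And>a b. a \<in> {0..1} \<Longrightarrow> b \<in> {0..1} \<Longrightarrow> star a b \<le> min a b"
    using A(7) by blast
  define cl where "cl = (\<lambda>a::real. max 0 (min 1 a))"
  have clc: "continuous_on UNIV cl" unfolding cl_def by (intro continuous_intros)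
  have stc: "continuous_on UNIV (\<lambda>p::real\<times>real. star (cl (fst p)) (cl (snd p)))"
  proof -
    have "continuous_on UNIV ((\<lambda>(a, b). star a b) \<circ> (\<lambda>p. (cl (fst p), cl (snd p))))"
    proof (rule continuous_on_compose)
      show "continuous_on UNIV (\<lambda>p::real\<times>real. (cl (fst p), cl (snd p)))"
        unfolding cl_def by (intro continuous_intros)
      show "continuous_on ((\<lambda>p. (cl (fst p), cl (snd p))) ` UNIV) (\<lambda>(a, b). star a b)"
        by (rule continuous_on_subset[OF A(4)]) (auto simp: cl_def)
    qed
    then show ?thesis by (simp add: comp_def)
  qed
  have m1: "(\<lambda>x. star (cl (f x)) (cl (g x))) \<in> borel_measurable M"
    by (rule borel_measurable_continuous_Pair[OF fm gm]) (use stc in simp)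
  have e: "\<And>x. x \<in> space M \<Longrightarrow> star (f x) (g x) = star (cl (f x)) (cl (g x))"
    using f01 g01 by (auto simp: cl_def)
  have sm[measurable]: "(\<lambda>x. star (f x) (g x)) \<in> borel_measurable M"
    by (subst measurable_cong[where g="\<lambda>x. star (cl (f x)) (cl (g x))"]) (use e m1 in auto)
  define F where "F = (\<lambda>x. f x powr be)"
  define G where "G = (\<lambda>x. g x powr ga)"
  define H where "H = (\<lambda>x. (star (f x) (g x)) powr al)"
  have Fm[measurable]: "F \<in> borel_measurable M" unfolding F_def by measurable
  have Gm[measurable]: "G \<in> borel_measurable M" unfolding G_def by measurable
  have Hm[measurable]: "H \<in> borel_measurable M" unfolding H_def by measurable
  have sF: "sugeno M m F \<le> 1" by (rule su_le1[OF A(8) A(9) Fm])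
  have sG: "sugeno M m G \<le> 1" by (rule su_le1[OF A(8) A(9) Gm])
  have sH: "sugeno M m H \<le> 1" by (rule su_le1[OF A(8) A(9) Hm])
  define u where "u = enn2real (sugeno M m F)"
  define v where "v = enn2real (sugeno M m G)"
  define L where "L = enn2real (sugeno M m H) powr la"
  have u01: "0 \<le> u" "u \<le> 1" unfolding u_def using sF
    by (auto simp: enn2real_leI)
  have v01: "0 \<le> v" "v \<le> 1" unfolding v_def using sG
    by (auto simp: enn2real_leI)
  have uF: "sugeno M m F = ennreal u" unfolding u_def
    by (rule ennreal_enn2real[symmetric]) (rule order.strict_trans1[OF sF], simp)
  have vG: "sugeno M m G = ennreal v" unfolding v_def
    by (rule ennreal_enn2real[symmetric]) (rule order.strict_trans1[OF sG], simp)
  have L0: "0 \<le> L" unfolding L_def by simp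
  have K: "star (c powr ups) (d powr tau) \<le> L" if c: "0 < c" "c < u" and d: "0 < d" "d < v" for c d
  proof -
    have c1: "c \<le> 1" and d1: "d \<le> 1" using c d u01 v01 by auto
    have mA: "ennreal c \<le> m {x\<in>space M. c \<le> F x}"
      by (rule su_approx[OF A(8) Fm c(1)]) (use c uF in \<open>simp add: ennreal_lessI\<close>)
    have mB: "ennreal d \<le> m {x\<in>space M. d \<le> G x}"
      by (rule su_approx[OF A(8) Gm d(1)]) (use d vG in \<open>simp add: ennreal_lessI\<close>)
    define SA where "SA = {x\<in>space M. c \<le> F x}"
    define SB where "SB = {x\<in>space M. d \<le> G x}"
    have SAm: "SA \<in> sets M" unfolding SA_def by measurable
    have SBm: "SB \<in> sets M" unfolding SB_def by measurable
    have chain: "SA \<subseteq> SB \<or> SB \<subseteq> SA"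
    proof (rule ccontr)
      assume "\<not> (SA \<subseteq> SB \<or> SB \<subseteq> SA)"
      then obtain x y where x: "x \<in> SA" "x \<notin> SB" and y: "y \<in> SB" "y \<notin> SA" by blast
      have xs: "x \<in> space M" and ys: "y \<in> space M" using x y unfolding SA_def SB_def by auto
      have "f y < f x"
      proof (rule ccontr)
        assume "\<not> f y < f x"
        then have "f x powr be \<le> f y powr be" using f01[OF xs] A(11) by (intro powr_mono2) auto
        then show False using x(1) y(2) ys unfolding SA_def F_def by auto
      qed
      moreover have "g x < g y"
      proof (rule ccontr)
        assume "\<not> g x < g y"
        then have "g y powr ga \<le> g x powr ga" using g01[OF ys] A(12) by (intro powr_mono2) auto
        then show False using y(1) x(2) xs unfolding SB_def G_def by auto
      qed
      ultimately have "(f x - f y) * (g x - g y) < 0" by (simp add: mult_pos_neg)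
      then show False using A(3) xs ys unfolding comonotone_def by force
    qed
    have mAB: "min (ennreal c) (ennreal d) \<le> m (SA \<inter> SB)"
      using chain mA mB unfolding SA_def[symmetric] SB_def[symmetric]
      by (metis Int_absorb1 Int_absorb2 min.coboundedI1 min.coboundedI2 order_trans)
    define c' where "c' = c powr (1/be)"
    define d' where "d' = d powr (1/ga)"
    have c'01: "c' \<in> {0..1}" unfolding c'_def using c c1 A(11) by (auto intro: powr_le1)
    have d'01: "d' \<in> {0..1}" unfolding d'_def using d d1 A(12) by (auto intro: powr_le1)
    have fc: "c' \<le> f x" if "x \<in> SA" for x
    proof -
      have xs: "x \<in> space M" and cx: "c \<le> f x powr be" using that unfolding SA_def F_def by auto
      have "c' \<le> (f x powr be) powr (1/be)" unfolding c'_def using cx c A(11) by (intro powr_mono2) auto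
      also have "\<dots> = f x" using f01[OF xs] A(11) by (simp add: powr_powr)
      finally show ?thesis .
    qed
    have gd: "d' \<le> g x" if "x \<in> SB" for x
    proof -
      have xs: "x \<in> space M" and dx: "d \<le> g x powr ga" using that unfolding SB_def G_def by auto
      have "d' \<le> (g x powr ga) powr (1/ga)" unfolding d'_def using dx d A(12) by (intro powr_mono2) auto
      also have "\<dots> = g x" using g01[OF xs] A(12) by (simp add: powr_powr)
      finally show ?thesis .
    qed
    define w where "w = star c' d'"
    have w01: "0 \<le> w" "w \<le> 1" unfolding w_def using st01[OF c'01 d'01] by auto
    have cu1: "c powr ups \<le> c'" unfolding c'_def
      by (rule powr_mono') (use c c1 A(11) A(17) in \<open>auto simp: field_simps\<close>)
    have du1: "d powr tau \<le> d'" unfolding d'_def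
      by (rule powr_mono') (use d d1 A(12) A(18) in \<open>auto simp: field_simps\<close>)
    have cu01: "c powr ups \<in> {0..1}" using c c1 A(14) by (auto intro: powr_le1)
    have du01: "d powr tau \<in> {0..1}" using d d1 A(15) by (auto intro: powr_le1)
    define z where "z = star (c powr ups) (d powr tau)"
    have zw: "z \<le> w" unfolding z_def w_def by (rule stmono[OF cu01 c'01 du01 d'01 cu1 du1])
    have zmin: "z \<le> min (c powr ups) (d powr tau)" unfolding z_def by (rule stmin[OF cu01 du01])
    show ?thesis
    proof (cases "z \<le> 0")
      case True then show ?thesis using L0 unfolding z_def by linarith
    next
      case False
      then have wpos: "w > 0" using zw by linarith
      define C where "C = {x\<in>space M. ennreal (w powr al) \<le> ennreal (H x)}"
      have Cm: "C \<in> sets M" unfolding C_def by measurable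
      have ABC: "SA \<inter> SB \<subseteq> C"
      proof
        fix x assume x: "x \<in> SA \<inter> SB"
        have xs: "x \<in> space M" using x unfolding SA_def by auto
        have "w \<le> star (f x) (g x)" unfolding w_def
          using stmono[OF c'01 _ d'01 _ fc gd] f01[OF xs] g01[OF xs] x by auto
        then have "w powr al \<le> H x" unfolding H_def using w01 A(10) by (intro powr_mono2) auto
        then show "x \<in> C" unfolding C_def using xs by (simp add: ennreal_leI)
      qed
      have "m (SA \<inter> SB) \<le> m C"
        by (rule mm_mono[OF A(8) _ Cm ABC]) (use SAm SBm in auto)
      then have "min (ennreal (w powr al)) (min (ennreal c) (ennreal d)) \<le> sugeno M m H"
      proof -
        have s1: "min (ennreal (w powr al)) (m C) \<le> sugeno M m H"
          unfolding C_def by (rule su_ge) (use wpos in simp)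
        have "min (ennreal c) (ennreal d) \<le> m C" using mAB \<open>m (SA \<inter> SB) \<le> m C\<close> by (rule order_trans)
        then have "min (ennreal (w powr al)) (min (ennreal c) (ennreal d)) \<le> min (ennreal (w powr al)) (m C)"
          by (rule min.mono[OF order_refl])
        then show ?thesis using s1 by (rule order_trans)
      qed
      then have q1: "ennreal (min (w powr al) (min c d)) \<le> sugeno M m H"
        by (simp add: ennmin)
      define q where "q = min (w powr al) (min c d)"
      have q0: "0 \<le> q" unfolding q_def using c d by auto
      have "sugeno M m H = ennreal (enn2real (sugeno M m H))"
        by (rule ennreal_enn2real[symmetric]) (rule order.strict_trans1[OF sH], simp)
      then have "q \<le> enn2real (sugeno M m H)" using q1 unfolding q_def[symmetric]
        by (metis enn2real_nonneg ennreal_le_iff)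
      then have qL: "q powr la \<le> L" unfolding L_def using q0 A(13) by (intro powr_mono2) auto
      have "z \<le> q powr la"
      proof -
        have "z \<le> (w powr al) powr la"
        proof -
          have "w = w powr 1" using wpos by simp
          also have "\<dots> \<le> w powr (al * la)" by (rule powr_mono') (use w01 A(16) in auto)
          also have "\<dots> = (w powr al) powr la" by (simp add: powr_powr)
          finally show ?thesis using zw by linarith
        qed
        moreover have "z \<le> c powr la"
        proof -
          have "c powr ups \<le> c powr la" by (rule powr_mono') (use c c1 A(20) in auto)
          then show ?thesis using zmin by (meson min.boundedE order_trans)
        qed
        moreover have "z \<le> d powr la"
        proof -
          have "d powr tau \<le> d powr la" by (rule powr_mono') (use d d1 A(19) in auto)
          then show ?thesis using zmin by (meson min.boundedE order_trans)
        qed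
        moreover have "q = w powr al \<or> q = c \<or> q = d" unfolding q_def by (simp add: min_def)
        ultimately show ?thesis by (elim disjE) simp_all
      qed
      then show ?thesis using qL unfolding z_def by linarith
    qed
  qed
  have goal: "star (u powr ups) (v powr tau) \<le> L"
  proof (cases "u = 0 \<or> v = 0")
    case True
    have u1: "u powr ups \<in> {0..1}" using u01 A(14) by (auto intro: powr_le1)
    have v1: "v powr tau \<in> {0..1}" using v01 A(15) by (auto intro: powr_le1)
    have "star (u powr ups) (v powr tau) \<le> min (u powr ups) (v powr tau)" by (rule stmin[OF u1 v1])
    also have "\<dots> \<le> 0" using True by auto
    finally show ?thesis using L0 by linarith
  next
    case False
    then have up: "u > 0" and vp: "v > 0" using u01 v01 by auto
    define e where "e = (\<lambda>n::nat. inverse (real (Suc (Suc n))))"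
    have e0: "e \<longlonglongrightarrow> 0" unfolding e_def
      using LIMSEQ_Suc[OF LIMSEQ_inverse_real_of_nat] by simp
    have e01: "0 < e n" "e n < 1" for n unfolding e_def by (auto simp: field_simps)
    define cs where "cs = (\<lambda>n. u * (1 - e n))"
    define ds where "ds = (\<lambda>n. v * (1 - e n))"
    have csl: "cs \<longlonglongrightarrow> u" unfolding cs_def using tendsto_mult[OF tendsto_const tendsto_diff[OF tendsto_const e0], of u 1] by simp
    have dsl: "ds \<longlonglongrightarrow> v" unfolding ds_def using tendsto_mult[OF tendsto_const tendsto_diff[OF tendsto_const e0], of v 1] by simp
    have cs: "0 < cs n" "cs n < u" for n unfolding cs_def using e01[of n] up by (auto simp: field_simps)
    have ds: "0 < ds n" "ds n < v" for n unfolding ds_def using e01[of n] vp by (auto simp: field_simps)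
    have lim: "(\<lambda>n. (\<lambda>(a, b). star a b) (cs n powr ups, ds n powr tau)) \<longlonglongrightarrow> (\<lambda>(a, b). star a b) (u powr ups, v powr tau)"
    proof (rule continuous_on_tendsto_compose[OF A(4)])
      show "(\<lambda>n. (cs n powr ups, ds n powr tau)) \<longlonglongrightarrow> (u powr ups, v powr tau)"
        by (intro tendsto_Pair tendsto_powr csl dsl tendsto_const) (use up vp in auto)
      show "(u powr ups, v powr tau) \<in> {0..1} \<times> {0..1}" using u01 v01 A(14) A(15) by (auto intro: powr_le1)
      show "\<forall>\<^sub>F n in sequentially. (cs n powr ups, ds n powr tau) \<in> {0..1} \<times> {0..1}"
      proof (intro always_eventually allI)
        fix n
        have "cs n powr ups \<le> 1" using cs[of n] u01 A(14) by (intro powr_le1) auto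
        moreover have "ds n powr tau \<le> 1" using ds[of n] v01 A(15) by (intro powr_le1) auto
        ultimately show "(cs n powr ups, ds n powr tau) \<in> {0..1} \<times> {0..1}" by auto
      qed
    qed
    have "(\<lambda>(a, b). star a b) (u powr ups, v powr tau) \<le> L"
      by (rule LIMSEQ_le_const2[OF lim]) (use K[OF cs ds] in simp)
    then show ?thesis by simp
  qed
  then show ?thesis unfolding L_def u_def v_def F_def G_def H_def .

qed

end
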